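(* Let $S$ be a Polish space and let $c:S\times S\to[0,\infty)$ satisfy (a) $c(x,x)=0$ for all $x\in S$; (b) $c(x,z)\le c(x,y)+c(y,z)$ for all $x,y,z\in S$; (c) there exist lower semicontinuous functions $c_n:S\times S\to[0,\infty)$, $n\in\mathbb N$, with $c_n\downarrow c$ pointwise as $n\to\infty$ (i.e. $c_n$ non-increasing in $n$ and converging pointwise to $c$). Then for all Borel probability measures $\mu,\nu$ on $S$, \[ \sup\Big\{\int_S\phi\,d\mu+\int_S\psi\,d\nu:\ \phi,\psi\in b\mathcal B(S),\ \phi(x)+\psi(y)\le c(x,y)\ \forall x,y\in S\Big\} =\sup\Big\{\int_S\phi\,d\mu-\int_S\phi\,d\nu:\ \phi\in b\mathcal B(S),\ \phi(x)-\phi(y)\le c(x,y)\ \forall x,y\in S\Big\}. \]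
   Context: $b\mathcal{B}(S)$ denotes the set of all bounded Borel measurable functions $S\to\mathbb{R}$. *)

theory Defs
  imports "HOL-Probability.Probability"
begin

definition lsc :: "('a::topological_space \<Rightarrow> real) \<Rightarrow> bool" where
  "lsc f \<longleftrightarrow> (\<forall>t. open {x. t < f x})"

definition bB :: "('a::topological_space \<Rightarrow> real) set" where
  "bB = {f. f \<in> borel_measurable borel \<and> bounded (range f)}"

end

theory Submission imports Defs begin

lemma lsc_borel: "lsc f \<Longrightarrow> f \<in> borel_measurable borel"
  unfolding lsc_def borel_measurable_iff_greater by auto

lemma lsc_inf_compact:
  fixes F :: "'a::topological_space \<times> 'b::topological_space \<Rightarrow> real"
  assumes "lsc F" "compact D" "\<And>x y. y \<in> D \<Longrightarrow> F (x, y) \<ge> L"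
  shows "lsc (\<lambda>x. Inf (insert M ((\<lambda>y. F (x, y)) ` D)))"
  unfolding lsc_def
proof (intro allI)
  fix t
  show "open {x. t < Inf (insert M ((\<lambda>y. F (x, y)) ` D))}"
  proof (rule Topological_Spaces.openI)
  fix x0 assume "x0 \<in> {x. t < Inf (insert M ((\<lambda>y. F (x, y)) ` D))}"
  then have I0: "t < Inf (insert M ((\<lambda>y. F (x0, y)) ` D))" by simp
  define s where "s = (t + Inf (insert M ((\<lambda>y. F (x0, y)) ` D))) / 2"
  have bdd: "bdd_below (insert M ((\<lambda>y. F (x, y)) ` D))" for x
    using assms(3) by (intro bdd_belowI[of _ "min M L"]) (auto simp: min.coboundedI2)
  have st: "t < s" "s < Inf (insert M ((\<lambda>y. F (x0, y)) ` D))" using I0 by (auto simp: s_def)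
  have W: "open {p. s < F p}" using assms(1) unfolding lsc_def by auto
  have "{x0} \<times> D \<subseteq> {p. s < F p}"
  proof clarify
    fix y assume "y \<in> D"
    then have "Inf (insert M ((\<lambda>y. F (x0, y)) ` D)) \<le> F (x0, y)"
      by (intro cInf_lower bdd) auto
    then show "s < F (x0, y)" using st by simp
  qed
  from Elementary_Topology.tube_lemma[OF assms(2) W this] obtain X0 where X0: "x0 \<in> X0" "open X0" "X0 \<times> D \<subseteq> {p. s < F p}"
    by blast
  show "\<exists>T. open T \<and> x0 \<in> T \<and> T \<subseteq> {x. t < Inf (insert M ((\<lambda>y. F (x, y)) ` D))}"
  proof (intro exI conjI)
    show "X0 \<subseteq> {x. t < Inf (insert M ((\<lambda>y. F (x, y)) ` D))}"
    proof
      fix x assume x: "x \<in> X0"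
      have "M \<ge> Inf (insert M ((\<lambda>y. F (x0, y)) ` D))" by (intro cInf_lower bdd) auto
      then have "s \<le> Inf (insert M ((\<lambda>y. F (x, y)) ` D))"
        using st X0(3) x by (intro cInf_greatest) auto
      then show "x \<in> {x. t < Inf (insert M ((\<lambda>y. F (x, y)) ` D))}" using st by simp
    qed
  qed (use X0 in auto)
qed
qed

lemma bB_bound:
  assumes "f \<in> bB" obtains B where "B > 0" "\<And>x. \<bar>f x\<bar> \<le> B"
proof -
  from assms obtain a where "\<forall>y\<in>range f. norm y \<le> a" unfolding bB_def bounded_iff by auto
  then have "\<And>x. \<bar>f x\<bar> \<le> max 1 a" by (simp add: max.coboundedI2)
  then show ?thesis using that[of "max 1 a"] by simp
qed

lemma inner_approx:
  fixes \<nu> :: "'a::polish_space measure"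
  assumes "prob_space \<nu>" "sets \<nu> = sets borel" "A \<in> sets borel" "\<eta> > 0"
  shows "\<exists>C. C \<subseteq> A \<and> compact C \<and> measure \<nu> (A - C) < \<eta>"
proof -
  interpret prob_space \<nu> by fact
  have AM: "A \<in> sets \<nu>" using assms by simp
  define a where "a = measure \<nu> A"
  show ?thesis
  proof (cases "a < \<eta>")
    case True then show ?thesis by (intro exI[of _ "{}"]) (auto simp: a_def)
  next
    case False
    have eq: "emeasure \<nu> A = (SUP K \<in> {K. K \<subseteq> A \<and> compact K}. emeasure \<nu> K)"
      by (rule inner_regular) (use assms in auto)
    have "ennreal (a - \<eta>) < ennreal a" using False assms(4) by (intro ennreal_lessI) auto
    also have "ennreal a = emeasure \<nu> A" by (simp add: a_def emeasure_eq_measure)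
    finally obtain K where K: "K \<subseteq> A" "compact K" "ennreal (a - \<eta>) < emeasure \<nu> K"
      unfolding eq less_SUP_iff by auto
    have KM: "K \<in> sets \<nu>" using K(2) assms(2) by (simp add: compact_imp_closed borel_closed)
    have "a - \<eta> < measure \<nu> K" using K(3) False assms(4)
      by (simp add: emeasure_eq_measure ennreal_less_iff)
    moreover have "measure \<nu> (A - K) = a - measure \<nu> K"
      using finite_measure_Diff[OF AM KM K(1)] by (simp add: a_def)
    ultimately show ?thesis using K by (intro exI[of _ K]) auto
  qed
qed

lemma main_approx:
  fixes c :: "'a::polish_space \<times> 'a \<Rightarrow> real"
    and cn :: "nat \<Rightarrow> 'a \<times> 'a \<Rightarrow> real"
    and \<mu> \<nu> :: "'a measure"
  assumes c_nonneg: "\<And>x y. c (x, y) \<ge> 0"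
    and c_diag: "\<And>x. c (x, x) = 0"
    and c_tri: "\<And>x y z. c (x, z) \<le> c (x, y) + c (y, z)"
    and cn_lsc: "\<And>n. lsc (cn n)"
    and cn_decr: "\<And>n p. cn (Suc n) p \<le> cn n p"
    and cn_lim: "\<And>p. (\<lambda>n. cn n p) \<longlonglongrightarrow> c p"
    and \<mu>_prob: "prob_space \<mu>" and \<mu>_borel: "sets \<mu> = sets borel"
    and \<nu>_prob: "prob_space \<nu>" and \<nu>_borel: "sets \<nu> = sets borel"
    and phi: "\<phi> \<in> bB" and psi: "\<psi> \<in> bB" and cons: "\<And>x y. \<phi> x + \<psi> y \<le> c (x, y)"
    and e: "\<epsilon> > 0"
  shows "\<exists>G. G \<in> bB \<and> (\<forall>x y. G x - G y \<le> c (x, y)) \<and>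
     integral\<^sup>L \<mu> \<phi> + integral\<^sup>L \<nu> \<psi> \<le> integral\<^sup>L \<mu> G - integral\<^sup>L \<nu> G + \<epsilon>"
proof -
  obtain B1 where B1: "B1 > 0" "\<And>x. \<bar>\<phi> x\<bar> \<le> B1" using bB_bound[OF phi] by blast
  obtain B2 where B2: "B2 > 0" "\<And>x. \<bar>\<psi> x\<bar> \<le> B2" using bB_bound[OF psi] by blast
  define M where "M = max B1 B2"
  have M: "M > 0" "\<And>x. \<bar>\<phi> x\<bar> \<le> M" "\<And>x. \<bar>\<psi> x\<bar> \<le> M"
    using B1 B2 unfolding M_def by (auto intro: max.coboundedI1 max.coboundedI2)
  have phim: "\<phi> \<in> borel_measurable borel" and psim: "\<psi> \<in> borel_measurable borel"
    using phi psi by (auto simp: bB_def)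
  define \<delta> where "\<delta> = \<epsilon> / 2"
  have \<delta>: "\<delta> > 0" using e by (simp add: \<delta>_def)
  define N where "N = nat \<lceil>2 * M / \<delta>\<rceil>"
  define t where "t = (\<lambda>k::nat. - M + real k * \<delta>)"
  define A where "A = (\<lambda>k. {y. t k \<le> \<psi> y})"
  define \<eta> where "\<eta> = \<epsilon> / (4 * M * (real N + 1))"
  have \<eta>: "\<eta> > 0" using e M by (simp add: \<eta>_def)
  have Ab: "A k \<in> sets borel" for k
    unfolding A_def using psim by measurable
  have "\<forall>k. \<exists>C. C \<subseteq> A k \<and> compact C \<and> measure \<nu> (A k - C) < \<eta>"
    using inner_approx[OF \<nu>_prob \<nu>_borel Ab \<eta>] by blast
  then obtain C where C: "\<And>k. C k \<subseteq> A k" "\<And>k. compact (C k)" "\<And>k. measure \<nu> (A k - C k) < \<eta>"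
    by metis
  define D where "D = (\<Union>k\<in>{..N}. C k \<times> {k})"
  have Dc: "compact D" unfolding D_def by (intro compact_UN compact_Times) (auto simp: C)
  define Fc where "Fc = (\<lambda>p::'a \<times> 'a \<times> nat. c (fst p, fst (snd p)) - t (snd (snd p)))"
  define Fn where "Fn = (\<lambda>n (p::'a \<times> 'a \<times> nat). cn n (fst p, fst (snd p)) - t (snd (snd p)))"
  define G where "G = (\<lambda>x. Inf (insert M ((\<lambda>q. Fc (x, q)) ` D)))"
  define Gn where "Gn = (\<lambda>n x. Inf (insert M ((\<lambda>q. Fn n (x, q)) ` D)))"
  define L where "L = - M - real N * \<delta>"
  have dec: "decseq (\<lambda>n. cn n p)" for p using cn_decr by (simp add: decseq_Suc_iff)
  have cle: "c p \<le> cn n p" for n p by (rule decseq_ge[OF dec cn_lim])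
  have tk: "t k \<le> M + real N * \<delta>" if "k \<le> N" for k
  proof -
    have "real k * \<delta> \<le> real N * \<delta>" using that \<delta> by (intro mult_right_mono) auto
    then show ?thesis using M by (simp add: t_def)
  qed
  have lowc: "L \<le> Fc (x, q)" if "q \<in> D" for x q
  proof -
    have "snd q \<le> N" using that by (auto simp: D_def)
    then show ?thesis using tk[of "snd q"] c_nonneg[of x "fst q"] by (simp add: Fc_def L_def)
  qed
  have lown: "L \<le> Fn n (x, q)" if "q \<in> D" for n x q
    using lowc[OF that, of x] cle[of "(x, fst q)" n] by (simp add: Fc_def Fn_def)
  have bddc: "bdd_below (insert M ((\<lambda>q. Fc (x, q)) ` D))" for x
    using lowc by (intro bdd_belowI[of _ "min M L"]) (auto simp: min.coboundedI2)
  have bddn: "bdd_below (insert M ((\<lambda>q. Fn n (x, q)) ` D))" for n x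
    using lown by (intro bdd_belowI[of _ "min M L"]) (auto simp: min.coboundedI2)
  have Fn_lsc: "lsc (Fn n)" for n
    unfolding lsc_def
  proof
    fix s
    have "{p. s < Fn n p} = (\<Union>k. (\<lambda>p. (fst p, fst (snd p))) -` {q. s + t k < cn n q} \<inter> (\<lambda>p. snd (snd p)) -` {k})"
      by (auto simp: Fn_def)
    moreover have "open ((\<lambda>p::'a \<times> 'a \<times> nat. (fst p, fst (snd p))) -` {q. s + t k < cn n q})" for k
      using cn_lsc[of n] unfolding lsc_def
      by (intro open_vimage) (auto intro!: continuous_intros)
    moreover have "open ((\<lambda>p::'a \<times> 'a \<times> nat. snd (snd p)) -` {k})" for k
      by (intro open_vimage) (auto intro!: continuous_intros simp: Topological_Spaces.open_discrete)
    ultimately show "open {p. s < Fn n p}" by (metis (no_types, lifting) open_UN open_Int)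
  qed
  have Gn_lsc: "lsc (Gn n)" for n
    unfolding Gn_def by (rule lsc_inf_compact[OF Fn_lsc Dc lown])
  have Gn_m: "Gn n \<in> borel_measurable borel" for n by (rule lsc_borel[OF Gn_lsc])
  have GleGn: "G x \<le> Gn n x" for n x
    unfolding Gn_def
  proof (rule cInf_greatest)
    fix v assume "v \<in> insert M ((\<lambda>q. Fn n (x, q)) ` D)"
    then show "G x \<le> v"
    proof
      assume "v = M" then show ?thesis unfolding G_def by (intro cInf_lower bddc) auto
    next
      assume "v \<in> (\<lambda>q. Fn n (x, q)) ` D"
      then obtain q where q: "q \<in> D" "v = Fn n (x, q)" by auto
      have "G x \<le> Fc (x, q)" unfolding G_def using q by (intro cInf_lower bddc) auto
      also have "\<dots> \<le> v" using q cle[of "(x, fst q)" n] by (simp add: Fc_def Fn_def)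
      finally show ?thesis .
    qed
  qed auto
  have G_INF: "G x = (INF n. Gn n x)" for x
  proof (rule antisym)
    show "G x \<le> (INF n. Gn n x)" by (intro cINF_greatest GleGn) auto
    have bdd: "bdd_below (range (\<lambda>n. Gn n x))" using GleGn by (intro bdd_belowI[of _ "G x"]) auto
    show "(INF n. Gn n x) \<le> G x"
      unfolding G_def
    proof (rule cInf_greatest)
      fix v assume "v \<in> insert M ((\<lambda>q. Fc (x, q)) ` D)"
      then show "(INF n. Gn n x) \<le> v"
      proof
        assume "v = M"
        have "(INF n. Gn n x) \<le> Gn 0 x" by (intro cINF_lower bdd) auto
        also have "\<dots> \<le> M" unfolding Gn_def by (intro cInf_lower bddn) auto
        finally show ?thesis using \<open>v = M\<close> by simp
      next
        assume "v \<in> (\<lambda>q. Fc (x, q)) ` D"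
        then obtain q where q: "q \<in> D" "v = Fc (x, q)" by auto
        show ?thesis
        proof (rule field_le_epsilon)
          fix r :: real assume r: "r > 0"
          from cn_lim[of "(x, fst q)"] r obtain n where n: "dist (cn n (x, fst q)) (c (x, fst q)) < r"
            unfolding lim_sequentially by blast
          have "(INF n. Gn n x) \<le> Gn n x" by (intro cINF_lower bdd) auto
          also have "\<dots> \<le> Fn n (x, q)" unfolding Gn_def using q by (intro cInf_lower bddn) auto
          also have "\<dots> \<le> v + r" using n q by (auto simp: Fn_def Fc_def dist_real_def)
          finally show "(INF n. Gn n x) \<le> v + r" .
        qed
      qed
    qed auto
  qed
  have Gm: "G \<in> borel_measurable borel"
    unfolding G_INF[abs_def] by (rule borel_measurable_cINF_real) (auto intro: Gn_m)
  have Gge: "\<phi> x \<le> G x" for x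
    unfolding G_def
  proof (rule cInf_greatest)
    fix v assume "v \<in> insert M ((\<lambda>q. Fc (x, q)) ` D)"
    then show "\<phi> x \<le> v"
    proof
      assume "v = M" then show ?thesis using M(2)[of x] by simp
    next
      assume "v \<in> (\<lambda>q. Fc (x, q)) ` D"
      then obtain y k where q: "(y, k) \<in> D" "v = Fc (x, (y, k))" by auto
      then have "y \<in> A k" using C(1) by (auto simp: D_def)
      then show ?thesis using q cons[of x y] by (auto simp: Fc_def A_def)
    qed
  qed auto
  have Gle: "G x \<le> M" for x unfolding G_def by (intro cInf_lower bddc) auto
  have Gabs: "\<bar>G x\<bar> \<le> M" for x using Gge[of x] Gle[of x] M(2)[of x] by auto
  have GC: "G y \<le> - t k" if "k \<le> N" "y \<in> C k" for y k
  proof -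
    have "(y, k) \<in> D" using that by (auto simp: D_def)
    then have "G y \<le> Fc (y, (y, k))" unfolding G_def by (intro cInf_lower bddc) auto
    then show ?thesis by (simp add: Fc_def c_diag)
  qed
  have Glip: "G x - G x' \<le> c (x, x')" for x x'
  proof -
    have "G x - c (x, x') \<le> Inf (insert M ((\<lambda>q. Fc (x', q)) ` D))"
    proof (rule cInf_greatest)
      fix v assume "v \<in> insert M ((\<lambda>q. Fc (x', q)) ` D)"
      then show "G x - c (x, x') \<le> v"
      proof
        assume "v = M" then show ?thesis using Gle[of x] c_nonneg[of x x'] by simp
      next
        assume "v \<in> (\<lambda>q. Fc (x', q)) ` D"
        then obtain q where q: "q \<in> D" "v = Fc (x', q)" by auto
        have "G x \<le> Fc (x, q)" unfolding G_def using q by (intro cInf_lower bddc) auto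
        then show ?thesis using q c_tri[where x=x and y=x' and z="fst q"] by (simp add: Fc_def)
      qed
    qed auto
    then show ?thesis by (simp add: G_def)
  qed
  have GbB: "G \<in> bB"
    unfolding bB_def using Gm Gabs by (auto simp: bounded_iff intro!: exI[of _ M])
  define U where "U = (\<Union>k\<in>{..N}. A k - C k)"
  have Ub: "U \<in> sets borel" unfolding U_def using Ab C(2)
    by (auto intro!: sets.finite_UN sets.Diff simp: compact_imp_closed borel_closed)
  have pw: "G y + \<psi> y \<le> \<delta> + 2 * M * indicator U y" for y
  proof (cases "y \<in> U")
    case True then show ?thesis using Gabs[of y] M(3)[of y] \<delta> by auto
  next
    case False
    define k where "k = nat \<lfloor>(\<psi> y + M) / \<delta>\<rfloor>"
    have nn: "0 \<le> (\<psi> y + M) / \<delta>" using M(3)[of y] \<delta> by auto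
    have k1: "real k \<le> (\<psi> y + M) / \<delta>" unfolding k_def using nn by linarith
    have k2: "(\<psi> y + M) / \<delta> < real k + 1" unfolding k_def using nn by linarith
    have "(\<psi> y + M) / \<delta> \<le> 2 * M / \<delta>" using M(3)[of y] \<delta> by (auto simp: divide_right_mono)
    then have kN: "k \<le> N" unfolding k_def N_def
      by (meson ceiling_mono le_nat_iff nat_mono floor_le_ceiling order.trans ceiling_le_iff)
    have "t k \<le> \<psi> y" using k1 \<delta> by (simp add: t_def field_simps)
    then have "y \<in> A k" by (simp add: A_def)
    then have "y \<in> C k" using False kN by (auto simp: U_def)
    then have "G y \<le> - t k" using GC kN by blast
    moreover have "\<psi> y < t k + \<delta>" using k2 \<delta> by (simp add: t_def field_simps)
    ultimately show ?thesis using False by simp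
  qed
  interpret mu: prob_space \<mu> by fact
  interpret nu: prob_space \<nu> by fact
  have mm: "f \<in> borel_measurable \<mu>" "f \<in> borel_measurable \<nu>" if "f \<in> borel_measurable borel" for f :: "'a \<Rightarrow> real"
    using that \<mu>_borel \<nu>_borel by (auto simp: measurable_def)
  have int_mu: "integrable \<mu> f" if "f \<in> borel_measurable borel" "\<And>x. \<bar>f x\<bar> \<le> M" for f
    using that by (intro mu.integrable_const_bound[of _ M] mm) auto
  have int_nu: "integrable \<nu> f" if "f \<in> borel_measurable borel" "\<And>x. \<bar>f x\<bar> \<le> (B::real)" for f B
    using that by (intro nu.integrable_const_bound[of _ B] mm) auto
  have I1: "integral\<^sup>L \<mu> \<phi> \<le> integral\<^sup>L \<mu> G"
    by (intro integral_mono int_mu phim Gm M Gabs Gge)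
  have Ui: "U \<in> sets \<nu>" using Ub \<nu>_borel by simp
  have "integral\<^sup>L \<nu> G + integral\<^sup>L \<nu> \<psi> = integral\<^sup>L \<nu> (\<lambda>y. G y + \<psi> y)"
    by (intro Bochner_Integration.integral_add[symmetric] int_nu[of G M] int_nu[of \<psi> M] Gm psim Gabs M)
  also have "\<dots> \<le> integral\<^sup>L \<nu> (\<lambda>y. \<delta> + 2 * M * indicator U y)"
  proof (rule integral_mono)
    show "integrable \<nu> (\<lambda>y. G y + \<psi> y)"
      by (intro Bochner_Integration.integrable_add int_nu[of G M] int_nu[of \<psi> M] Gm psim Gabs M)
    show "integrable \<nu> (\<lambda>y. \<delta> + 2 * M * indicator U y)"
      using Ui by (intro Bochner_Integration.integrable_add integrable_mult_right integrable_real_indicator) (auto simp: nu.emeasure_eq_measure)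
  qed (rule pw)
  also have "\<dots> = \<delta> + 2 * M * measure \<nu> U"
  proof -
    have "integral\<^sup>L \<nu> (\<lambda>y. \<delta> + 2 * M * indicator U y) = integral\<^sup>L \<nu> (\<lambda>y. \<delta>) + integral\<^sup>L \<nu> (\<lambda>y. 2 * M * indicator U y)"
      using Ui by (intro Bochner_Integration.integral_add integrable_mult_right integrable_real_indicator)
        (auto simp: nu.emeasure_eq_measure)
    then show ?thesis using Ui by (simp add: nu.prob_space nu.emeasure_eq_measure)
  qed
  also have "measure \<nu> U \<le> (\<Sum>k\<in>{..N}. measure \<nu> (A k - C k))"
    unfolding U_def using Ab C(2) \<nu>_borel
    by (intro nu.finite_measure_subadditive_finite)
       (auto intro!: sets.Diff simp: compact_imp_closed borel_closed)
  also have "\<dots> \<le> (\<Sum>k\<in>{..N}. \<eta>)" using C(3) by (intro sum_mono less_imp_le)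
  also have "\<dots> = (real N + 1) * \<eta>" by simp
  finally have I2: "integral\<^sup>L \<nu> G + integral\<^sup>L \<nu> \<psi> \<le> \<delta> + 2 * M * ((real N + 1) * \<eta>)"
    using M by (simp add: mult_left_mono)
  have "2 * M * ((real N + 1) * \<eta>) = \<epsilon> / 2"
  proof -
    have "M * (real N + 1) \<noteq> 0" using M(1) by simp
    then show ?thesis unfolding \<eta>_def by (simp add: field_simps)
  qed
  then have "integral\<^sup>L \<nu> G + integral\<^sup>L \<nu> \<psi> \<le> \<epsilon>" using I2 by (simp add: \<delta>_def)
  then show ?thesis using I1 GbB Glip by (intro exI[of _ G]) auto
qed

theorem theorem1p2:
  fixes c :: "'a::polish_space \<times> 'a \<Rightarrow> real"
    and cn :: "nat \<Rightarrow> 'a \<times> 'a \<Rightarrow> real"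
    and \<mu> \<nu> :: "'a measure"
  assumes c_nonneg: "\<And>x y. c (x, y) \<ge> 0"
    and c_diag: "\<And>x. c (x, x) = 0"
    and c_tri: "\<And>x y z. c (x, z) \<le> c (x, y) + c (y, z)"
    and cn_lsc: "\<And>n. lsc (cn n)"
    and cn_nonneg: "\<And>n p. cn n p \<ge> 0"
    and cn_decr: "\<And>n p. cn (Suc n) p \<le> cn n p"
    and cn_lim: "\<And>p. (\<lambda>n. cn n p) \<longlonglongrightarrow> c p"
    and \<mu>_prob: "prob_space \<mu>" and \<mu>_borel: "sets \<mu> = sets borel"
    and \<nu>_prob: "prob_space \<nu>" and \<nu>_borel: "sets \<nu> = sets borel"
  shows "(SUP (\<phi>, \<psi>) \<in> {(\<phi>, \<psi>). \<phi> \<in> bB \<and> \<psi> \<in> bB \<and> (\<forall>x y. \<phi> x + \<psi> y \<le> c (x, y))}.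
            ereal (integral\<^sup>L \<mu> \<phi> + integral\<^sup>L \<nu> \<psi>))
       = (SUP \<phi> \<in> {\<phi>. \<phi> \<in> bB \<and> (\<forall>x y. \<phi> x - \<phi> y \<le> c (x, y))}.
            ereal (integral\<^sup>L \<mu> \<phi> - integral\<^sup>L \<nu> \<phi>))"
proof (rule antisym)
  let ?R = "(SUP \<phi> \<in> {\<phi>. \<phi> \<in> bB \<and> (\<forall>x y. \<phi> x - \<phi> y \<le> c (x, y))}.
            ereal (integral\<^sup>L \<mu> \<phi> - integral\<^sup>L \<nu> \<phi>))"
  let ?L = "(SUP (\<phi>, \<psi>) \<in> {(\<phi>, \<psi>). \<phi> \<in> bB \<and> \<psi> \<in> bB \<and> (\<forall>x y. \<phi> x + \<psi> y \<le> c (x, y))}.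
            ereal (integral\<^sup>L \<mu> \<phi> + integral\<^sup>L \<nu> \<psi>))"
  show "?L \<le> ?R"
  proof (rule SUP_least, clarify)
    fix \<phi> \<psi> :: "'a \<Rightarrow> real"
    assume phi: "\<phi> \<in> bB" and psi: "\<psi> \<in> bB" and cons: "\<forall>x y. \<phi> x + \<psi> y \<le> c (x, y)"
    show "ereal (integral\<^sup>L \<mu> \<phi> + integral\<^sup>L \<nu> \<psi>) \<le> ?R"
    proof (rule ereal_le_epsilon2)
      fix e :: real assume e: "0 < e"
      obtain G where G: "G \<in> bB" "\<forall>x y. G x - G y \<le> c (x, y)"
        "integral\<^sup>L \<mu> \<phi> + integral\<^sup>L \<nu> \<psi> \<le> integral\<^sup>L \<mu> G - integral\<^sup>L \<nu> G + e"
        using main_approx[OF c_nonneg c_diag c_tri cn_lsc cn_decr cn_lim \<mu>_prob \<mu>_borel \<nu>_prob \<nu>_borel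
            phi psi _ e] cons by blast
      have "ereal (integral\<^sup>L \<mu> G - integral\<^sup>L \<nu> G) \<le> ?R"
        using G by (intro SUP_upper) auto
      then have "ereal (integral\<^sup>L \<mu> G - integral\<^sup>L \<nu> G) + ereal e \<le> ?R + ereal e"
        by (rule add_right_mono)
      moreover have "ereal (integral\<^sup>L \<mu> \<phi> + integral\<^sup>L \<nu> \<psi>) \<le> ereal (integral\<^sup>L \<mu> G - integral\<^sup>L \<nu> G) + ereal e"
        using G(3) by simp
      ultimately show "ereal (integral\<^sup>L \<mu> \<phi> + integral\<^sup>L \<nu> \<psi>) \<le> ?R + ereal e" by (rule order_trans[rotated])
    qed
  qed
  show "?R \<le> ?L"
  proof (rule SUP_least, clarify)
    fix \<phi> :: "'a \<Rightarrow> real"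
    assume phi: "\<phi> \<in> bB" and lip: "\<forall>x y. \<phi> x - \<phi> y \<le> c (x, y)"
    have m: "(\<lambda>x. - \<phi> x) \<in> bB" using phi unfolding bB_def
      by (auto simp: bounded_iff)
    have "(\<phi>, \<lambda>x. - \<phi> x) \<in> {(\<phi>, \<psi>). \<phi> \<in> bB \<and> \<psi> \<in> bB \<and> (\<forall>x y. \<phi> x + \<psi> y \<le> c (x, y))}"
      using phi m lip by auto
    then have "ereal (integral\<^sup>L \<mu> \<phi> + integral\<^sup>L \<nu> (\<lambda>x. - \<phi> x)) \<le> ?L"
      by (rule SUP_upper2) simp
    then show "ereal (integral\<^sup>L \<mu> \<phi> - integral\<^sup>L \<nu> \<phi>) \<le> ?L" by simp
  qed
qed

end
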